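(* Let $(S,+)$ be a commutative semigroup and let $A\subseteq S$ be a set of A.P. rich. Fix $l\in\mathbb{N}$ and put \[ B=\{(a,b)\in S\times S:\ \{a,\,a+b,\,a+2b,\dots,\,a+lb\}\subseteq A\}. \] Then $B$ is a set of A.P. rich in the semigroup $S\times S$ (with coordinatewise addition).
   Context: Semigroups are written additively; for $n\in\mathbb{N}$ and $b\in S$, $nb$ denotes $b+b+\dots+b$ ($n$ summands), and $a+0b$ means $a$. An arithmetic progression of length $k$ in a semigroup $T$ is a set $\{a,\,a+b,\,a+2b,\dots,\,a+kb\}$ with $a,b\in T$ (if $T$ has an identity element, $b$ is required not to be the identity). A subset $A$ of a semigroup $T$ is called a set of A.P. rich if it contains arithmetic progressions of arbitrary length, i.e. for every $k\in\mathbb{N}$ there exist $a,b\in T$ with $a+ib\in A$ for all $0\le i\le k$. $S\times S$ is a semigroup under coordinatewise addition. *)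

theory Defs
  imports Main "HOL-Library.Product_Plus"
begin

fun ap_term :: "'a::plus \<Rightarrow> 'a \<Rightarrow> nat \<Rightarrow> 'a" where
  "ap_term a b 0 = a"
| "ap_term a b (Suc i) = ap_term a b i + b"

definition is_identity :: "'a::plus \<Rightarrow> bool" where
  "is_identity e \<longleftrightarrow> (\<forall>x. e + x = x \<and> x + e = x)"

text \<open>A contains arithmetic progressions of arbitrary length; the difference b must not be
  the identity element (automatically satisfied if there is none).\<close>
definition AP_rich :: "'a::plus set \<Rightarrow> bool" where
  "AP_rich A \<longleftrightarrow> (\<forall>k::nat. \<exists>a b. \<not> is_identity b \<and> (\<forall>i\<le>k. ap_term a b i \<in> A))"

end

theory Submission
  imports Defs
begin

lemma ap_add: "ap_term (ap_term x y m) y n = ap_term x y (m + n)"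
  by (induction n) auto

lemma ap_pair: "ap_term (a, b) (c, d) j = (ap_term a c j, ap_term b d j)"
  by (induction j) auto

lemma ap_plus_yy: "ap_term a y n + ap_term (y::'a::ab_semigroup_add) y j = ap_term a y (n + j + 1)"
proof (induction j)
  case 0 then show ?case by simp
next
  case (Suc j)
  have "ap_term a y n + ap_term y y (Suc j) = (ap_term a y n + ap_term y y j) + y"
    by (simp add: add.assoc)
  then show ?case using Suc by simp
qed

lemma ap_mult: "ap_term x (ap_term (y::'a::ab_semigroup_add) y j) i = ap_term x y (i * (j + 1))"
proof (induction i)
  case 0 then show ?case by simp
next
  case (Suc i)
  then show ?case using ap_plus_yy[of x y "i*(j+1)" j] by (simp add: algebra_simps)
qed

lemma ap_full: "ap_term (ap_term x y j) (ap_term (y::'a::ab_semigroup_add) y j) i = ap_term x y (j + i * (j + 1))"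
  by (simp add: ap_mult ap_add)

theorem theorem2:
  fixes A :: "'a::ab_semigroup_add set" and l :: nat
  assumes "AP_rich A"
  shows "AP_rich {(a :: 'a, b). \<forall>i\<le>l. ap_term a b i \<in> A}"
  unfolding AP_rich_def
proof
  fix k :: nat
  obtain x y where ny: "\<not> is_identity y" and xy: "\<forall>m\<le>k + l * (k + 1). ap_term x y m \<in> A"
    using assms unfolding AP_rich_def by blast
  have nid: "\<not> is_identity (y, y)"
    using ny unfolding is_identity_def by (auto simp: plus_prod_def)
  have "\<forall>j\<le>k. ap_term (x, y) (y, y) j \<in> {(a, b). \<forall>i\<le>l. ap_term a b i \<in> A}"
  proof (intro allI impI)
    fix j assume j: "j \<le> k"
    have "\<forall>i\<le>l. ap_term (ap_term x y j) (ap_term y y j) i \<in> A"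
    proof (intro allI impI)
      fix i assume i: "i \<le> l"
      have "i * (j + 1) \<le> l * (k + 1)" using i j by (intro mult_le_mono) auto
      then have "j + i * (j + 1) \<le> k + l * (k + 1)" using j by linarith
      then show "ap_term (ap_term x y j) (ap_term y y j) i \<in> A"
        using xy ap_full by metis
    qed
    then show "ap_term (x, y) (y, y) j \<in> {(a, b). \<forall>i\<le>l. ap_term a b i \<in> A}"
      by (simp add: ap_pair)
  qed
  then show "\<exists>a b. \<not> is_identity b \<and> (\<forall>j\<le>k. ap_term a b j \<in> {(a, b). \<forall>i\<le>l. ap_term a b i \<in> A})"
    using nid by blast
qed

end
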